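(* For every prime $p>7$, $$H_{\frac{p-1}{2}}^{(3)}\equiv 6\,\frac{H_{p-1}}{p^2}-\frac{81}{10}\,p^2B_{p-5}\pmod{p^3}.$$
   Context: $H_n^{(r)}=\sum_{j=1}^n j^{-r}$, $H_n=H_n^{(1)}$ (for $p>3$, $H_{p-1}/p^2$ is $p$-integral). Bernoulli numbers: $\sum_{n\ge0}B_nt^n/n!=t/(e^t-1)$. Congruences are between $p$-adic integers. *)

theory Defs
  imports "HOL-Computational_Algebra.Computational_Algebra"
begin

definition harm :: "nat \<Rightarrow> nat \<Rightarrow> rat" where
  "harm r n = (\<Sum>j=1..n. 1 / (of_nat j) ^ r)"

definition bernoulli :: "nat \<Rightarrow> rat" where
  "bernoulli n = fact n * fps_nth (fps_X / (fps_exp 1 - 1)) n"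

definition p_integral :: "nat \<Rightarrow> rat \<Rightarrow> bool" where
  "p_integral p x \<longleftrightarrow> \<not> int p dvd snd (quotient_of x)"

definition padic_cong :: "nat \<Rightarrow> nat \<Rightarrow> rat \<Rightarrow> rat \<Rightarrow> bool" where
  "padic_cong p k x y \<longleftrightarrow> p_integral p ((x - y) / (of_nat p) ^ k)"

end

theory Submission
  imports Defs "HOL-Number_Theory.Residues"
begin

definition pint :: "nat \<Rightarrow> rat \<Rightarrow> bool" where
  "pint p x \<longleftrightarrow> (\<exists>a b. b \<noteq> 0 \<and> \<not> int p dvd b \<and> x = of_int a / of_int b)"

lemma p_integral_iff:
  assumes "prime p" shows "p_integral p x \<longleftrightarrow> pint p x"
proof
  assume "p_integral p x"
  obtain a b where q: "quotient_of x = (a,b)" by (cases "quotient_of x")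
  then have "b > 0" by (rule quotient_of_denom_pos)
  with q quotient_of_div[OF q] \<open>p_integral p x\<close> show "pint p x"
    unfolding pint_def p_integral_def by (intro exI[of _ a] exI[of _ b]) auto
next
  assume "pint p x"
  then obtain a b where ab: "b \<noteq> 0" "\<not> int p dvd b" "x = of_int a / of_int b"
    unfolding pint_def by blast
  obtain c d where q: "quotient_of x = (c,d)" by (cases "quotient_of x")
  have d0: "d > 0" using q by (rule quotient_of_denom_pos)
  have cop: "coprime c d" using q by (rule quotient_of_coprime)
  have "of_int a / of_int b = (of_int c / of_int d :: rat)" using quotient_of_div[OF q] ab by simp
  then have "of_int (a * d) = (of_int (c * b) :: rat)" using ab d0 by (simp add: field_simps)
  then have e: "a * d = c * b" by linarith
  then have "d dvd c * b" by (metis dvd_triv_right)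
  with cop have "d dvd b" using coprime_commute coprime_dvd_mult_right_iff by blast
  have "\<not> int p dvd d"
  proof
    assume "int p dvd d" then have "int p dvd b" using \<open>d dvd b\<close> by (rule dvd_trans)
    with ab(2) show False by blast
  qed
  then show "p_integral p x" unfolding p_integral_def q by simp
qed

lemma pint_of_int[simp]: "prime p \<Longrightarrow> pint p (of_int a)"
  unfolding pint_def by (rule exI[of _ a], rule exI[of _ 1]) auto

lemma pint_of_nat[simp]: "prime p \<Longrightarrow> pint p (of_nat a)"
  using pint_of_int[of p "int a"] by simp

lemma pint_0[simp]: "prime p \<Longrightarrow> pint p 0" using pint_of_int[of p 0] by simp
lemma pint_1[simp]: "prime p \<Longrightarrow> pint p 1" using pint_of_int[of p 1] by simp
lemma pint_numeral[simp]: "prime p \<Longrightarrow> pint p (numeral k)" using pint_of_nat[of p "numeral k"] by simp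

lemma pint_add[intro]: assumes "prime p" "pint p x" "pint p y" shows "pint p (x + y)"
proof -
  obtain a b where ab: "b \<noteq> 0" "\<not> int p dvd b" "x = of_int a / of_int b" using assms unfolding pint_def by blast
  obtain c d where cd: "d \<noteq> 0" "\<not> int p dvd d" "y = of_int c / of_int d" using assms unfolding pint_def by blast
  have "x + y = of_int (a*d + c*b) / of_int (b*d)" using ab cd by (simp add: field_simps)
  moreover have "\<not> int p dvd b*d" using ab cd assms(1) by (simp add: prime_dvd_mult_iff)
  ultimately show ?thesis unfolding pint_def using ab cd by (intro exI[of _ "a*d + c*b"] exI[of _ "b*d"]) auto
qed

lemma pint_mult[intro]: assumes "prime p" "pint p x" "pint p y" shows "pint p (x * y)"
proof -
  obtain a b where ab: "b \<noteq> 0" "\<not> int p dvd b" "x = of_int a / of_int b" using assms unfolding pint_def by blast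
  obtain c d where cd: "d \<noteq> 0" "\<not> int p dvd d" "y = of_int c / of_int d" using assms unfolding pint_def by blast
  have "x * y = of_int (a*c) / of_int (b*d)" using ab cd by (simp add: field_simps)
  moreover have "\<not> int p dvd b*d" using ab cd assms(1) by (simp add: prime_dvd_mult_iff)
  ultimately show ?thesis unfolding pint_def using ab cd by (intro exI[of _ "a*c"] exI[of _ "b*d"]) auto
qed

lemma pint_uminus[intro]: assumes "pint p x" shows "pint p (- x)"
proof -
  obtain a b where ab: "b \<noteq> 0" "\<not> int p dvd b" "x = of_int a / of_int b" using assms unfolding pint_def by blast
  then show ?thesis unfolding pint_def by (intro exI[of _ "-a"] exI[of _ b]) auto
qed

lemma pint_diff[intro]: assumes "prime p" "pint p x" "pint p y" shows "pint p (x - y)"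
  using pint_add[OF assms(1,2) pint_uminus[OF assms(3)]] by simp

lemma pint_div_int[intro]: assumes "prime p" "pint p x" "\<not> int p dvd b" shows "pint p (x / of_int b)"
proof -
  obtain a c where ab: "c \<noteq> 0" "\<not> int p dvd c" "x = of_int a / of_int c" using assms unfolding pint_def by blast
  have b0: "b \<noteq> 0" using assms(3) by (metis dvd_0_right)
  have "x / of_int b = of_int a / of_int (c*b)" using ab by simp
  moreover have "\<not> int p dvd c*b" using ab assms by (simp add: prime_dvd_mult_iff)
  ultimately show ?thesis unfolding pint_def using ab b0 by (intro exI[of _ a] exI[of _ "c*b"]) auto
qed

lemma pint_sum[intro]: assumes "prime p" "\<And>i. i \<in> I \<Longrightarrow> pint p (f i)" shows "pint p (sum f I)"
  using assms(2) by (induction I rule: infinite_finite_induct) (auto intro: pint_add[OF assms(1)] simp: assms(1))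

lemma pint_pow[intro]: assumes "prime p" "pint p x" shows "pint p (x ^ k)"
  by (induction k) (auto intro: pint_mult[OF assms(1)] assms(2) simp: assms(1))

definition G :: "rat fps" where "G = fps_X / (fps_exp 1 - 1)"

lemma bernoulli_G: "bernoulli n = fact n * G $ n"
  by (simp add: bernoulli_def G_def)

lemma E1_ne: "fps_exp (1::rat) - 1 \<noteq> 0"
proof
  assume "fps_exp (1::rat) - 1 = 0"
  then have "(fps_exp (1::rat) - 1) $ 1 = 0" by simp
  then show False by simp
qed

lemma G_mult: "G * (fps_exp 1 - 1) = fps_X"
  unfolding G_def
proof (rule fps_times_divide_eq[OF E1_ne])
  have "subdegree (fps_exp (1::rat) - 1) \<le> 1" by (rule subdegree_leI) simp
  then show "subdegree (fps_exp (1::rat) - 1) \<le> subdegree (fps_X :: rat fps)" by simp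
qed

lemma G_rec: "(\<Sum>k=0..m. G$k / fact (Suc m - k)) = (if m = 0 then 1 else 0)"
proof -
  have "(G * (fps_exp 1 - 1)) $ Suc m = fps_X $ Suc m" using G_mult by simp
  also have "\<dots> = (if m = 0 then 1 else 0)" by simp
  also have "(G * (fps_exp 1 - 1)) $ Suc m = (\<Sum>i=0..Suc m. G$i * (fps_exp 1 - 1) $ (Suc m - i))"
    by (rule fps_mult_nth)
  also have "\<dots> = (\<Sum>i=0..m. G$i * (fps_exp 1 - 1) $ (Suc m - i))"
    by (simp add: sum.atLeast0_atMost_Suc)
  also have "\<dots> = (\<Sum>k=0..m. G$k / fact (Suc m - k))"
  proof (rule sum.cong)
    fix k assume "k \<in> {0..m}"
    then have "Suc m - k \<noteq> 0" by simp
    then have "(fps_exp 1 - 1) $ (Suc m - k) = (1::rat) / fact (Suc m - k)" by simp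
    then show "G$k * (fps_exp 1 - 1) $ (Suc m - k) = G$k / fact (Suc m - k)" by simp
  qed simp
  finally show ?thesis .
qed

lemma G0: "G $ 0 = 1" using G_rec[of 0] by simp

lemma coef_pint:
  assumes "prime p" "Suc m < p" "k \<le> Suc m"
  shows "pint p (fact m / (fact k * fact (Suc m - k)))"
proof -
  have "(of_nat (Suc m choose k) :: rat) = fact (Suc m) / (fact k * fact (Suc m - k))"
    using assms(3) by (intro binomial_fact) simp
  then have "(of_nat (Suc m choose k) :: rat) / of_nat (Suc m) = of_nat (Suc m) * fact m / (fact k * fact (Suc m - k)) / of_nat (Suc m)"
    by (simp only: fact_Suc)
  also have "\<dots> = fact m / (fact k * fact (Suc m - k))" by (simp del: of_nat_Suc)
  finally have e: "(fact m :: rat) / (fact k * fact (Suc m - k)) = of_nat (Suc m choose k) / of_int (int (Suc m))"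
    by simp
  have "\<not> int p dvd int (Suc m)" using assms(2) by (auto dest: dvd_imp_le simp del: of_nat_Suc)
  then show ?thesis unfolding e using assms(1) by (intro pint_div_int) auto
qed

lemma bern_pint: "prime p \<Longrightarrow> Suc m < p \<Longrightarrow> pint p (fact m * G$m)"
proof (induction m rule: less_induct)
  case (less m)
  show ?case
  proof (cases "m = 0")
    case True then show ?thesis using less G0 by simp
  next
    case False
    then obtain m' where m': "m = Suc m'" by (cases m) auto
    have "(\<Sum>k=0..m. G$k / fact (Suc m - k)) = 0" using G_rec[of m] False by simp
    then have "(\<Sum>k=0..m'. G$k / fact (Suc m - k)) + G$m = 0"
      using m' by (simp add: sum.atLeast0_atMost_Suc)
    then have "G$m = - (\<Sum>k=0..m'. G$k / fact (Suc m - k))" by (simp add: algebra_simps)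
    then have "fact m * G$m = - (\<Sum>k=0..m'. (fact k * G$k) * (fact m / (fact k * fact (Suc m - k))))"
      by (simp add: sum_distrib_left field_simps)
    moreover have "pint p ((fact k * G$k) * (fact m / (fact k * fact (Suc m - k))))" if "k \<in> {0..m'}" for k
      using that less m' by (intro pint_mult coef_pint less.IH) auto
    ultimately show ?thesis using less by (auto intro!: pint_uminus pint_sum)
  qed
qed

definition bc :: "nat \<Rightarrow> rat \<Rightarrow> rat" where "bc M x = (G * fps_exp x) $ M"

lemma bc_diff: assumes "M \<ge> 1" shows "bc M (x+1) - bc M x = x^(M-1) / fact (M-1)"
proof -
  have "G * fps_exp (x+1) - G * fps_exp x = (G * (fps_exp 1 - 1)) * fps_exp x"
    by (simp add: fps_exp_add_mult algebra_simps)
  also have "\<dots> = fps_X * fps_exp x" by (simp add: G_mult)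
  finally have "(G * fps_exp (x+1) - G * fps_exp x) $ M = (fps_X * fps_exp x) $ M" by simp
  then show ?thesis using assms unfolding bc_def by simp
qed

lemma bc_0: "bc M 0 = G $ M" unfolding bc_def by simp

lemma bc_sum: assumes "M \<ge> 1" shows "(\<Sum>j<N. of_nat j ^ (M-1)) / fact (M-1) = bc M (of_nat N) - bc M 0"
proof (induction N)
  case 0 then show ?case by simp
next
  case (Suc N)
  have "(\<Sum>j<Suc N. (of_nat j::rat) ^ (M-1)) / fact (M-1)
       = (\<Sum>j<N. of_nat j ^ (M-1)) / fact (M-1) + of_nat N ^ (M-1) / fact (M-1)"
    by (simp add: add_divide_distrib)
  also have "\<dots> = bc M (of_nat (Suc N)) - bc M 0" using Suc bc_diff[OF assms, of "of_nat N"] by (simp add: add.commute)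
  finally show ?case by simp
qed

lemma bc_half: "bc M (1/2) = (2/2^M - 1) * G$M"
proof -
  define H where "H = G oo (fps_const (1/2) * fps_X)"
  have Hn: "H $ n = (1/2)^n * G$n" for n unfolding H_def by (simp add: fps_compose_linear)
  have c0: "(fps_const (1/2::rat) * fps_X) $ 0 = 0" by simp
  have "H * (fps_exp (1/2) - 1) = (G * (fps_exp 1 - 1)) oo (fps_const (1/2) * fps_X)"
    unfolding H_def fps_compose_mult_distrib[OF c0] by (simp add: fps_compose_sub_distrib)
  also have "\<dots> = fps_const (1/2) * fps_X" by (simp add: G_mult)
  finally have HE: "H * (fps_exp (1/2) - 1) = fps_const (1/2) * fps_X" .
  have E1: "fps_exp (1::rat) = fps_exp (1/2) * fps_exp (1/2)"
    by (simp flip: fps_exp_add_mult)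
  have "(G * fps_exp (1/2) + G - 2 * H) * (fps_exp 1 - 1)
      = fps_exp (1/2) * (G * (fps_exp 1 - 1)) + G * (fps_exp 1 - 1)
        - 2 * (H * (fps_exp (1/2) - 1)) * (fps_exp (1/2) + 1)"
    by (simp add: E1 algebra_simps)
  also have "\<dots> = fps_exp (1/2) * fps_X + fps_X - 2 * (fps_const (1/2) * fps_X) * (fps_exp (1/2) + 1)"
    by (simp add: G_mult HE)
  also have "\<dots> = 0"
  proof -
    have "2 * fps_const (1/2::rat) = 1" by (simp add: numeral_fps_const fps_const_mult[symmetric] del: fps_const_mult)
    then show ?thesis by (simp add: algebra_simps) (metis (no_types, lifting) mult.assoc mult.commute mult_1 \<open>2 * fps_const (1/2::rat) = 1\<close> add.commute)
  qed
  finally have "G * fps_exp (1/2) + G - 2 * H = 0" using E1_ne by simp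
  then have "(G * fps_exp (1/2) + G - 2 * H) $ M = 0" by simp
  moreover have "(2*H)$M = 2 * H$M" by (simp add: numeral_fps_const)
  ultimately have "bc M (1/2) + G$M - 2 * ((1/2)^M * G$M) = 0" unfolding bc_def by (simp add: Hn)
  then show ?thesis by (simp add: field_simps power_divide)
qed

definition cg :: "nat \<Rightarrow> nat \<Rightarrow> rat \<Rightarrow> rat \<Rightarrow> bool" where
  "cg p k x y \<longleftrightarrow> pint p ((x - y) / of_nat p ^ k)"

context
  fixes p :: nat assumes pr: "prime p"
begin

lemma p0: "(of_nat p :: rat) \<noteq> 0" using pr by (auto simp: prime_gt_0_nat)

lemma cg_refl[simp]: "cg p k x x" unfolding cg_def using pr by simp

lemma cg_sym: "cg p k x y \<Longrightarrow> cg p k y x"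
proof -
  assume "cg p k x y"
  moreover have "(y - x) / of_nat p ^ k = - ((x - y) / of_nat p ^ k)" using p0 by (simp add: field_simps)
  ultimately show ?thesis unfolding cg_def by (simp add: pint_uminus)
qed

lemma cg_trans: "cg p k x y \<Longrightarrow> cg p k y z \<Longrightarrow> cg p k x z"
proof -
  assume "cg p k x y" "cg p k y z"
  moreover have "(x - z) / of_nat p ^ k = (x - y) / of_nat p ^ k + (y - z) / of_nat p ^ k" using p0 by (simp add: field_simps)
  ultimately show ?thesis unfolding cg_def by (simp add: pint_add[OF pr])
qed

lemma cg_add: "cg p k x y \<Longrightarrow> cg p k u v \<Longrightarrow> cg p k (x + u) (y + v)"
proof -
  assume "cg p k x y" "cg p k u v"
  moreover have "(x + u - (y + v)) / of_nat p ^ k = (x - y) / of_nat p ^ k + (u - v) / of_nat p ^ k" using p0 by (simp add: field_simps)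
  ultimately show ?thesis unfolding cg_def by (simp add: pint_add[OF pr])
qed

lemma cg_diff: "cg p k x y \<Longrightarrow> cg p k u v \<Longrightarrow> cg p k (x - u) (y - v)"
proof -
  assume "cg p k x y" "cg p k u v"
  moreover have "(x - u - (y - v)) / of_nat p ^ k = (x - y) / of_nat p ^ k - (u - v) / of_nat p ^ k" using p0 by (simp add: field_simps)
  ultimately show ?thesis unfolding cg_def by (simp add: pint_diff[OF pr])
qed

lemma cg_mult: assumes "cg p k x y" "cg p k u v" "pint p x" "pint p v"
  shows "cg p k (x * u) (y * v)"
proof -
  have "(x*u - y*v) / of_nat p ^ k = x * ((u - v) / of_nat p ^ k) + ((x - y) / of_nat p ^ k) * v"
    using p0 by (simp add: field_simps)
  note e = this
  show ?thesis using assms unfolding cg_def e by (intro pint_add[OF pr] pint_mult[OF pr])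
qed

lemma cg_sum: "(\<And>i. i \<in> I \<Longrightarrow> cg p k (f i) (g i)) \<Longrightarrow> cg p k (sum f I) (sum g I)"
  by (induction I rule: infinite_finite_induct) (auto intro: cg_add)

lemma cg_pow: assumes "cg p k x y" "pint p x" "pint p y" shows "cg p k (x ^ j) (y ^ j)"
proof (induction j)
  case 0 then show ?case by simp
next
  case (Suc j) then show ?case using assms by (auto intro!: cg_mult pint_pow[OF pr])
qed

lemma cg_iff: "cg p k x y \<longleftrightarrow> (\<exists>r. pint p r \<and> x = y + of_nat p ^ k * r)"
  unfolding cg_def using p0 by (auto intro!: exI[of _ "(x - y) / of_nat p ^ k"] simp: field_simps)

end

lemma pint_inv_nat: "prime p \<Longrightarrow> \<not> p dvd j \<Longrightarrow> pint p (1 / of_nat j)"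
  using pint_div_int[of p 1 "int j"] by auto

lemma fermat_rat: assumes "prime p" "\<not> p dvd j"
  obtains t :: nat where "(of_nat j :: rat) ^ (p - 1) = 1 + of_nat p * of_nat t"
proof -
  have "[j ^ (p - 1) = 1] (mod p)" by (rule fermat_theorem[OF assms])
  moreover have "j ^ (p-1) \<ge> 1" using assms by (cases j) auto
  ultimately obtain t where "j ^ (p-1) = t * p + 1"
    using cong_le_nat by blast
  then have "(of_nat (j ^ (p-1)) :: rat) = of_nat (t * p + 1)" by simp
  then have "(of_nat j::rat)^(p-1) = 1 + of_nat p * of_nat t" by (simp add: algebra_simps)
  then show ?thesis by (rule that)
qed

lemma S5_cong:
  assumes pr: "prime p" and p7: "p > 7"
  shows "cg p 1 (harm 5 ((p-1) div 2)) (-6 * bernoulli (p-5))"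
proof -
  define n where "n = (p-1) div 2"
  define M where "M = p - 5"
  have oddp: "odd p" using pr p7 by (intro prime_odd_nat) auto
  have pn: "p = 2*n+1" using oddp unfolding n_def by presburger
  have p9: "p \<noteq> 9"
  proof
    assume "p = 9"
    then have "prime ((3::nat) * 3)" using pr by simp
    then show False using prime_product by fastforce
  qed
  have p11: "p \<ge> 11" using oddp p7 p9 by presburger
  have M6: "M \<ge> 6" using p11 unfolding M_def by simp
  obtain m where mM: "M = Suc m" using M6 by (cases M) auto
  have pM: "p = M + 5" using p7 unfolding M_def by auto
  have P0: "(of_nat p :: rat) \<noteq> 0" using p7 by auto
  have ndvd: "\<not> p dvd j" if "0 < j" "j < p" for j using that by (auto dest: dvd_imp_le)
  have s1: "cg p 1 (harm 5 n) (\<Sum>j=1..n. (of_nat j :: rat) ^ (M-1))"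
    unfolding harm_def
  proof (rule cg_sum[OF pr])
    fix j assume j: "j \<in> {1..n}"
    then have jp: "\<not> p dvd j" using pn by (intro ndvd) auto
    obtain t where t: "(of_nat j :: rat) ^ (p - 1) = 1 + of_nat p * of_nat t"
      using fermat_rat[OF pr jp] by blast
    have j0: "(of_nat j :: rat) \<noteq> 0" using j by auto
    have "(of_nat j :: rat) ^ (M-1) * of_nat j ^ 5 = of_nat j ^ (p-1)"
    proof -
      have "M - 1 + 5 = p - 1" using M6 pM by simp
      then show ?thesis by (metis power_add)
    qed
    then have "(of_nat j :: rat) ^ (M-1) = (1 + of_nat p * of_nat t) / of_nat j ^ 5"
      using j0 t by (simp add: field_simps)
    then have e: "1 / (of_nat j :: rat) ^ 5 = of_nat j ^ (M-1) + of_nat p ^ 1 * (- (of_nat t * (1 / of_nat j) ^ 5))"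
      using j0 by (simp add: field_simps)
    have "pint p (- (of_nat t * (1 / of_nat j) ^ 5))"
      using pr jp by (intro pint_uminus pint_mult pint_pow pint_inv_nat) auto
    then show "cg p 1 (1 / of_nat j ^ 5) (of_nat j ^ (M-1))"
      unfolding cg_iff[OF pr] using e by blast
  qed
  define W where "W x = fact (M-1) * bc M x" for x
  have s2: "(\<Sum>j=1..n. (of_nat j :: rat) ^ (M-1)) = W (of_nat (Suc n)) - W 0"
  proof -
    have "(\<Sum>j<Suc n. (of_nat j :: rat) ^ (M-1)) = (\<Sum>j=0..n. (of_nat j :: rat) ^ (M-1))"
      by (simp add: lessThan_Suc_atMost atLeast0AtMost)
    also have "\<dots> = (\<Sum>j=1..n. (of_nat j :: rat) ^ (M-1))"
      using M6 by (simp add: sum.atLeast_Suc_atMost)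
    finally have e1: "(\<Sum>j=1..n. (of_nat j :: rat) ^ (M-1)) = (\<Sum>j<Suc n. (of_nat j :: rat) ^ (M-1))" ..
    have bs: "(\<Sum>j<Suc n. (of_nat j :: rat) ^ (M-1)) / fact (M-1) = bc M (of_nat (Suc n)) - bc M 0"
      by (rule bc_sum) (use M6 in simp)
    have "(\<Sum>j<Suc n. (of_nat j :: rat) ^ (M-1)) = fact (M-1) * ((\<Sum>j<Suc n. (of_nat j :: rat) ^ (M-1)) / fact (M-1))"
      by simp
    also have "\<dots> = W (of_nat (Suc n)) - W 0" unfolding bs W_def by (simp add: algebra_simps)
    finally have "(\<Sum>j<Suc n. (of_nat j :: rat) ^ (M-1)) = W (of_nat (Suc n)) - W 0" .
    with e1 show ?thesis by simp
  qed
  have W_exp: "W x = (\<Sum>k=0..M. (fact k * G$k) * (fact m / (fact k * fact (Suc m - k))) * x^(M-k))" for x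
  proof -
    have "bc M x = (\<Sum>k=0..M. G$k * (x^(M-k) / fact (M-k)))" unfolding bc_def fps_mult_nth by simp
    then show ?thesis unfolding W_def mM by (simp add: sum_distrib_left field_simps)
  qed
  have coefs: "pint p ((fact k * G$k) * (fact m / (fact k * fact (Suc m - k))))" if "k \<in> {0..M}" for k
    using that pr pM mM by (intro pint_mult[OF pr] bern_pint coef_pint) auto
  have pM2: "\<not> p dvd 2"
  proof
    assume "p dvd 2" then have "p \<le> 2" by (rule dvd_imp_le) simp
    with p7 show False by simp
  qed
  have half: "pint p (1/2)" using pint_inv_nat[OF pr pM2] by simp
  have cN: "cg p 1 (of_nat (Suc n)) (1/2)"
  proof -
    have "(of_nat (Suc n) :: rat) = 1/2 + of_nat p ^ 1 * (1/2)" using pn by (simp add: field_simps)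
    then show ?thesis unfolding cg_iff[OF pr] using half by blast
  qed
  have s4: "cg p 1 (W (of_nat (Suc n))) (W (1/2))"
    unfolding W_exp
  proof (rule cg_sum[OF pr])
    fix k assume k: "k \<in> {0..M}"
    have cp: "cg p 1 ((of_nat (Suc n) :: rat) ^ (M-k)) ((1/2) ^ (M-k))"
      by (rule cg_pow[OF pr cN]) (use pr half in auto)
    show "cg p 1 (fact k * G $ k * (fact m / (fact k * fact (Suc m - k))) * of_nat (Suc n) ^ (M - k))
             (fact k * G $ k * (fact m / (fact k * fact (Suc m - k))) * (1 / 2) ^ (M - k))"
      by (rule cg_mult[OF pr cg_refl[OF pr] cp coefs[OF k] pint_pow[OF pr half]])
  qed
  have BM: "bernoulli M = of_nat M * (fact (M-1) * G$M)"
    unfolding bernoulli_G mM by (simp add: fact_Suc)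
  have M0: "(of_nat M :: rat) \<noteq> 0" using M6 by simp
  have s5: "W (1/2) - W 0 = ((2/2^M - 2) / of_nat M) * bernoulli M"
    unfolding W_def bc_half bc_0 BM using M0 by (simp add: field_simps)
  obtain t where t: "(2 :: rat) ^ (p - 1) = 1 + of_nat p * of_nat t"
    using fermat_rat[OF pr pM2] by auto
  have "(2::rat) ^ M * 16 = 2 ^ (p - 1)"
  proof -
    have "M + 4 = p - 1" using pM by simp
    moreover have "(2::rat) ^ M * 16 = 2 ^ (M + 4)" by (simp add: power_add)
    ultimately show ?thesis by simp
  qed
  then have t2: "(2::rat) ^ M * 16 = 1 + of_nat p * of_nat t" using t by simp
  have "(0::rat) < 1 + of_nat p * of_nat t" by (rule add_pos_nonneg) auto
  then have q0: "1 + (of_nat p :: rat) * of_nat t \<noteq> 0" by simp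
  define r where "r = (6 - 32 * of_nat t * (1 / of_nat (1 + p * t))) * (1 / of_nat M :: rat)"
  have rp: "pint p r" unfolding r_def
  proof (intro pint_mult[OF pr] pint_diff[OF pr] pint_inv_nat[OF pr])
    show "\<not> p dvd 1 + p * t"
    proof
      assume "p dvd 1 + p * t"
      then have "p dvd p * t + 1" by (simp add: add.commute)
      then have "p dvd 1" using dvd_add_right_iff[of p "p*t" 1] by simp
      then show False using pr by simp
    qed
    show "\<not> p dvd M" using pM M6 by (auto dest: dvd_imp_le)
  qed (use pr in auto)
  have Mp: "(of_nat M :: rat) = of_nat p - 5" using pM by simp
  have "(2/2^M - 2) / of_nat M = (-6 :: rat) + of_nat p ^ 1 * r"
  proof -
    have "(2:: rat) / 2^M = 32 / (2^M * 16)" by simp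
    also have "\<dots> = 32 / (1 + of_nat p * of_nat t)" by (simp only: t2)
    finally have "(2:: rat) / 2^M = 32 / (1 + of_nat p * of_nat t)" .
    moreover have gen: "(32/X - 2)/(P-5) = -6 + P * ((6 - 32*T*(1/X)) * (1/(P-5)))"
      if "X = 1 + P*T" "X \<noteq> 0" "P - 5 \<noteq> 0" for P T X :: rat
    proof -
      have XY: "(1 + P*T) * (1/X) = 1" using that by simp
      have gy: "32*Y - 2 = (-6)*(P-5) + P*(6 - 32*T*Y)" if "(1 + P*T) * Y = 1" for Y :: rat
      proof -
        have "32*Y - 2 - ((-6)*(P-5) + P*(6 - 32*T*Y)) = 32 * ((1 + P*T) * Y - 1)"
          by (simp add: algebra_simps)
        then show ?thesis using that by simp
      qed
      have "32*(1/X) - 2 = (-6)*(P-5) + P*(6 - 32*T*(1/X))" using gy[OF XY] .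
      then have "(32*(1/X) - 2)/(P-5) = ((-6)*(P-5) + P*(6 - 32*T*(1/X)))/(P-5)" by simp
      also have "\<dots> = (-6)*(P-5)/(P-5) + P * ((6 - 32*T*(1/X)) * (1/(P-5)))"
        by (simp add: add_divide_distrib)
      also have "(-6)*(P-5)/(P-5) = (-6::rat)" using that(3) by (rule nonzero_mult_div_cancel_right)
      finally show ?thesis by simp
    qed
    moreover have "(of_nat (1 + p * t) :: rat) = 1 + of_nat p * of_nat t" by simp
    ultimately show ?thesis unfolding r_def Mp using q0 M0[unfolded Mp]
      by (simp only: power_one_right) (rule gen, auto)
  qed
  then have s6: "cg p 1 ((2/2^M - 2) / of_nat M) (-6)" unfolding cg_iff[OF pr] using rp by blast
  have Bp: "pint p (bernoulli M)" unfolding bernoulli_G using pr pM by (intro bern_pint) auto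
  have s7': "cg p 1 (bernoulli M * ((2/2^M - 2) / of_nat M)) (bernoulli M * (-6))"
    using s6 Bp pr by (intro cg_mult[OF pr]) auto
  then have s7: "cg p 1 (((2/2^M - 2) / of_nat M) * bernoulli M) (-6 * bernoulli M)"
    by (simp add: mult.commute)
  have "cg p 1 (W (of_nat (Suc n)) - W 0) (W (1/2) - W 0)" using s4 by (intro cg_diff[OF pr]) (auto simp: pr)
  then have "cg p 1 (harm 5 n) (W (1/2) - W 0)" using s1 s2 cg_trans[OF pr] by metis
  then have "cg p 1 (harm 5 n) (-6 * bernoulli M)" using s5 s7 cg_trans[OF pr] by metis
  then show ?thesis unfolding n_def M_def .
qed

lemma poly_id:
  fixes P x :: rat
  shows "20*P^2*x^2*(P-x)^4*(P-2*x)^4 - 27*P^4*(P-x)^4*(P-2*x)^4 + 2*(20*x^4*(P-x)^4*(P-2*x)^4)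
     + 2*(20*x^5*(P-x)^3*(P-2*x)^4) - 8*(10*x^4*(P-x)^4*(P-2*x)^4) - 8*(20*x^5*(P-x)^4*(P-2*x)^3)
     + 16*P^3*x*(P-x)^4*(P-2*x)^4 + 16*P^3*x^5*(P-2*x)^4 - P^3*x*(P-x)^4*(P-2*x)^4 - 16*P^3*x^5*(P-x)^4
   = P^5 * (1920*x^7 - 7060*P*x^6 + 11295*P^2*x^5 - 10167*P^3*x^4 + 5550*P^4*x^3
                 - 1834*P^5*x^2 + 339*P^6*x - 27*P^7)"
  by (simp add: eval_nat_numeral algebra_simps)

lemma distr:
  fixes a b c d e f g k l m n q D :: rat
  shows "(a - b + c*(2*(d+e) - 8*(f+g)) + k*((l+m) - (n+q))) * D
    = a*D - b*D + 2*(c*d*D) + 2*(c*e*D) - 8*(c*f*D) - 8*(c*g*D) + k*l*D + k*m*D - k*n*D - k*q*D"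
  by (simp add: algebra_simps)

lemma key_identity:
  fixes P x :: rat
  assumes x0: "x \<noteq> 0" and P0: "P \<noteq> 0" and A0: "P - x \<noteq> 0" and C0: "P - 2*x \<noteq> 0"
  shows "1/x^3 - (27/20)*P^2/x^5
         + (1/P^2) * (2*(1/x + 1/(P-x)) - 8*(1/(2*x) + 1/(P-2*x)))
         + (4/5)*P*((1/x^4 + 1/(P-x)^4) - (1/(2*x)^4 + 1/(P-2*x)^4))
       = P^3 * ((1920*x^7 - 7060*P*x^6 + 11295*P^2*x^5 - 10167*P^3*x^4 + 5550*P^4*x^3
                 - 1834*P^5*x^2 + 339*P^6*x - 27*P^7) / (20 * x^5 * (P-x)^4 * (P-2*x)^4))"
    (is "?L = P^3 * (?Q / ?E)")
proof -
  define A where "A = P - x"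
  define C where "C = P - 2*x"
  define D where "D = 20*P^2*x^5*A^4*C^4"
  have D0: "D \<noteq> 0" unfolding D_def A_def C_def using x0 P0 A0 C0 by simp
  have a0: "A \<noteq> 0" "C \<noteq> 0" unfolding A_def C_def using A0 C0 by auto
  have t1: "1/x^3 * D = 20*P^2*x^2*A^4*C^4" unfolding D_def using x0 by (simp add: field_simps eval_nat_numeral)
  have t2: "(27/20)*P^2/x^5 * D = 27*P^4*A^4*C^4" unfolding D_def using x0 by (simp add: field_simps eval_nat_numeral)
  have t3: "1/P^2 * (1/x) * D = 20*x^4*A^4*C^4" unfolding D_def using x0 P0 by (simp add: field_simps eval_nat_numeral)
  have t4: "1/P^2 * (1/A) * D = 20*x^5*A^3*C^4" unfolding D_def using a0 P0 by (simp add: field_simps eval_nat_numeral)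
  have t5: "1/P^2 * (1/(2*x)) * D = 10*x^4*A^4*C^4" unfolding D_def using x0 P0 by (simp add: field_simps eval_nat_numeral)
  have t6: "1/P^2 * (1/C) * D = 20*x^5*A^4*C^3" unfolding D_def using a0 P0 by (simp add: field_simps eval_nat_numeral)
  have t7: "(4/5)*P * (1/x^4) * D = 16*P^3*x*A^4*C^4" unfolding D_def using x0 by (simp add: field_simps eval_nat_numeral)
  have t8: "(4/5)*P * (1/A^4) * D = 16*P^3*x^5*C^4" unfolding D_def using a0 by (simp add: field_simps eval_nat_numeral)
  have t9: "(4/5)*P * (1/(2*x)^4) * D = P^3*x*A^4*C^4" unfolding D_def using x0 by (simp add: field_simps eval_nat_numeral)
  have t10: "(4/5)*P * (1/C^4) * D = 16*P^3*x^5*A^4" unfolding D_def using a0 by (simp add: field_simps eval_nat_numeral)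
  have "?L * D = P^5 * ?Q"
    unfolding A_def[symmetric] C_def[symmetric] distr t1 t2 t3 t4 t5 t6 t7 t8 t9 t10
    using poly_id[of P x] unfolding A_def[symmetric] C_def[symmetric] by simp
  then have "?L = P^5 * ?Q / D" using D0 by (simp add: field_simps)
  also have "\<dots> = P^3 * (?Q / ?E)"
  proof -
    have DE: "D = P^2 * ?E" unfolding D_def A_def C_def by (simp add: algebra_simps)
    have E0: "?E \<noteq> 0" using x0 A0 C0 by simp
    have "P^5 * ?Q / (P^2 * ?E) = (P^2 * (P^3 * ?Q)) / (P^2 * ?E)" by (simp add: power_add[symmetric] mult.assoc)
    also have "\<dots> = P^3 * ?Q / ?E" by (rule mult_divide_mult_cancel_left) (use P0 in simp)
    finally show ?thesis unfolding DE by simp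
  qed
  finally show ?thesis .
qed

lemma sum_split_rev:
  fixes f :: "nat \<Rightarrow> rat"
  shows "(\<Sum>j=1..2*n. f j) = (\<Sum>i=1..n. f i + f (2*n+1-i))"
proof -
  have u: "{1..2*n} = {1..n} \<union> {n+1..2*n}" by auto
  have "(\<Sum>j=1..2*n. f j) = (\<Sum>j=1..n. f j) + (\<Sum>j=n+1..2*n. f j)"
    unfolding u by (rule sum.union_disjoint) auto
  also have "(\<Sum>j=n+1..2*n. f j) = (\<Sum>i=1..n. f (2*n+1-i))"
    by (rule sum.reindex_bij_witness[of _ "\<lambda>i. 2*n+1-i" "\<lambda>j. 2*n+1-j"]) auto
  finally show ?thesis by (simp add: sum.distrib)
qed

lemma sum_even_odd:
  fixes f :: "nat \<Rightarrow> rat"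
  shows "(\<Sum>j=1..2*n. f j) = (\<Sum>i=1..n. f (2*i) + f (2*i-1))"
proof (induction n)
  case 0 then show ?case by simp
next
  case (Suc n)
  have "(\<Sum>j=1..2*Suc n. f j) = (\<Sum>j=1..2*n. f j) + f (2*n+1) + f (2*n+2)"
    by (simp add: sum.cl_ivl_Suc)
  then show ?case using Suc by (simp add: sum.cl_ivl_Suc)
qed

lemma sum_split_eo:
  fixes f :: "nat \<Rightarrow> rat"
  shows "(\<Sum>j=1..2*n. f j) = (\<Sum>i=1..n. f (2*i) + f (2*n+1-2*i))"
proof -
  have "(\<Sum>i=1..n. f (2*i-1)) = (\<Sum>i=1..n. f (2*n+1-2*i))"
    by (rule sum.reindex_bij_witness[of _ "\<lambda>i. n+1-i" "\<lambda>i. n+1-i"]) (auto simp: algebra_simps)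
  then show ?thesis unfolding sum_even_odd by (simp add: sum.distrib)
qed

lemma sum_lin:
  fixes a b d e g k :: "nat \<Rightarrow> rat"
  shows "(\<Sum>i\<in>I. a i - c1 * b i + c2 * (2 * d i - 8 * e i) + c3 * (g i - k i))
    = sum a I - c1 * sum b I + c2 * (2 * sum d I - 8 * sum e I) + c3 * (sum g I - sum k I)"
  by (simp add: sum.distrib sum_subtractf flip: sum_distrib_left)

theorem lemma3p1:
  fixes p :: nat
  assumes "prime p" and "p > 7"
  shows "padic_cong p 3 (harm 3 ((p - 1) div 2))
           (6 * harm 1 (p - 1) / (of_nat p)^2 - 81/10 * (of_nat p)^2 * bernoulli (p - 5))"
proof -
  note pr = assms(1) and p7 = assms(2)
  define n where "n = (p-1) div 2"
  define P where "P = (of_nat p :: rat)"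
  have oddp: "odd p" using pr p7 by (intro prime_odd_nat) auto
  have pn: "p = 2*n+1" using oddp unfolding n_def by presburger
  have pm1: "p - 1 = 2*n" using pn by simp
  have Pn: "P = 1 + 2 * of_nat n" unfolding P_def pn by simp
  have P0: "P \<noteq> 0" unfolding P_def using p7 by simp
  have ndvd: "\<not> p dvd j" if "0 < j" "j < p" for j using that by (auto dest: dvd_imp_le)
  define A1 where "A1 = harm 1 (p-1)"
  define A4 where "A4 = (\<Sum>j=1..2*n. 1 / (of_nat j :: rat) ^ 4)"
  have ofd: "(of_nat (2*n+1-i) :: rat) = P - of_nat i" if "i \<le> 2*n+1" for i
    using that unfolding P_def pn by (simp add: of_nat_diff)
  have ofd2: "(of_nat (2*n+1-2*i) :: rat) = P - 2 * of_nat i" if "i \<le> n" for i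
    using that unfolding P_def pn by (simp add: of_nat_diff)
  have A1a: "A1 = (\<Sum>i=1..n. 1/of_nat i + 1/(P - of_nat i))"
    unfolding A1_def harm_def pm1 sum_split_rev[of "\<lambda>j. 1 / (of_nat j :: rat) ^ 1"]
    by (rule sum.cong) (auto simp: ofd Pn)
  have A1b: "A1 = (\<Sum>i=1..n. 1/(2 * of_nat i) + 1/(P - 2 * of_nat i))"
    unfolding A1_def harm_def pm1 sum_split_eo[of "\<lambda>j. 1 / (of_nat j :: rat) ^ 1"]
    by (rule sum.cong) (auto simp: ofd2 Pn)
  have A4a: "A4 = (\<Sum>i=1..n. 1/of_nat i ^ 4 + 1/(P - of_nat i) ^ 4)"
    unfolding A4_def sum_split_rev[of "\<lambda>j. 1 / (of_nat j :: rat) ^ 4"]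
    by (rule sum.cong) (auto simp: ofd Pn)
  have A4b: "A4 = (\<Sum>i=1..n. 1/(2 * of_nat i) ^ 4 + 1/(P - 2 * of_nat i) ^ 4)"
    unfolding A4_def sum_split_eo[of "\<lambda>j. 1 / (of_nat j :: rat) ^ 4"]
    by (rule sum.cong) (auto simp: ofd2 Pn)
  define Qf where "Qf x = (1920*x^7 - 7060*P*x^6 + 11295*P^2*x^5 - 10167*P^3*x^4 + 5550*P^4*x^3
                 - 1834*P^5*x^2 + 339*P^6*x - 27*P^7) / (20 * x^5 * (P-x)^4 * (P-2*x)^4)" for x :: rat
  define hh where "hh i = 1/(of_nat i)^3 - (27/20*P^2) * (1/(of_nat i)^5)
     + (1/P^2) * (2 * (1/of_nat i + 1/(P - of_nat i)) - 8 * (1/(2 * of_nat i) + 1/(P - 2 * of_nat i)))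
     + (4/5*P) * ((1/of_nat i ^ 4 + 1/(P - of_nat i) ^ 4) - (1/(2 * of_nat i) ^ 4 + 1/(P - 2 * of_nat i) ^ 4))"
    for i :: nat
  have hsum: "(\<Sum>i=1..n. hh i) = harm 3 n - (27/20*P^2) * harm 5 n + (1/P^2) * (2 * A1 - 8 * A1)
      + (4/5*P) * (A4 - A4)"
    unfolding hh_def sum_lin A1a[symmetric] A1b[symmetric] A4a[symmetric] A4b[symmetric] harm_def ..
  have hq: "hh i = P^3 * Qf (of_nat i)" if i: "i \<in> {1..n}" for i
  proof -
    have x0: "(of_nat i :: rat) \<noteq> 0" using i by simp
    have A0: "P - of_nat i \<noteq> 0" using i pn unfolding P_def by auto
    have C0: "P - 2 * of_nat i \<noteq> 0" using i pn unfolding P_def by auto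
    show ?thesis unfolding hh_def Qf_def using key_identity[OF x0 P0 A0 C0] by simp
  qed
  have qp: "pint p (Qf (of_nat i))" if i: "i \<in> {1..n}" for i
  proof -
    define Qi where "Qi = (1920*int i^7 - 7060*int p*int i^6 + 11295*int p^2*int i^5 - 10167*int p^3*int i^4
        + 5550*int p^4*int i^3 - 1834*int p^5*int i^2 + 339*int p^6*int i - 27*int p^7)"
    have e: "Qf (of_nat i) = of_int Qi * ((1/4) * (1/5) * (1/of_nat i)^5 * (1/of_nat (p-i))^4 * (1/of_nat (p-2*i))^4)"
      using i pn unfolding Qf_def Qi_def P_def by (simp add: of_nat_diff field_simps)
    have n4: "\<not> p dvd 4" using p7 by (auto dest: dvd_imp_le)
    have n5: "\<not> p dvd 5" using p7 by (auto dest: dvd_imp_le)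
    have ni: "\<not> p dvd i" "\<not> p dvd (p-i)" "\<not> p dvd (p-2*i)" using i pn ndvd[of i] ndvd[of "p-i"] ndvd[of "p-2*i"] by auto
    have i4: "pint p (1/4)" using pint_inv_nat[OF pr n4] by simp
    have i5: "pint p (1/5)" using pint_inv_nat[OF pr n5] by simp
    show ?thesis unfolding e
      by (intro pint_mult[OF pr] pint_pow[OF pr] pint_inv_nat[OF pr] pint_of_int[OF pr] i4 i5 ni)
  qed
  obtain r5 where r5: "pint p r5" "harm 5 n = -6 * bernoulli (p-5) + P ^ 1 * r5"
    using S5_cong[OF pr p7] unfolding cg_iff[OF pr] n_def P_def by blast
  have main: "harm 3 n - (6 * A1 / P^2 - 81/10 * P^2 * bernoulli (p - 5))
      = P^3 * ((\<Sum>i=1..n. Qf (of_nat i)) + 27/20 * r5)"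
  proof -
    have "(\<Sum>i=1..n. hh i) = P^3 * (\<Sum>i=1..n. Qf (of_nat i))"
      using hq by (simp add: sum_distrib_left)
    moreover have "(1/P^2) * (2 * A1 - 8 * A1) = - (6 * A1 / P^2)" by simp
    ultimately have e1: "harm 3 n = P^3 * (\<Sum>i=1..n. Qf (of_nat i)) + (27/20*P^2) * harm 5 n + 6 * A1 / P^2"
      using hsum by simp
    show ?thesis unfolding e1 r5(2) using P0 by (simp add: field_simps eval_nat_numeral)
  qed
  have "pint p ((harm 3 n - (6 * A1 / P^2 - 81/10 * P^2 * bernoulli (p - 5))) / P^3)"
  proof -
    have n20: "\<not> p dvd 20"
    proof
      assume "p dvd 20"
      then have "p dvd 4 * 5" by simp
      then have "p dvd 4 \<or> p dvd 5" using pr prime_dvd_mult_iff[of p 4 5] by blast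
      then show False using p7 by (auto dest: dvd_imp_le)
    qed
    have c: "pint p (27/20)" using pint_mult[OF pr pint_of_nat[OF pr, of 27] pint_inv_nat[OF pr n20]] by simp
    have "P^3 * ((\<Sum>i=1..n. Qf (of_nat i)) + 27/20 * r5) / P^3 = (\<Sum>i=1..n. Qf (of_nat i)) + 27/20 * r5"
      using P0 by simp
    moreover have "pint p ((\<Sum>i=1..n. Qf (of_nat i)) + 27/20 * r5)"
      using qp r5(1) c by (intro pint_add[OF pr] pint_mult[OF pr] pint_sum[OF pr])
    ultimately show ?thesis unfolding main by simp
  qed
  then show ?thesis unfolding padic_cong_def p_integral_iff[OF pr] n_def[symmetric] A1_def[symmetric] P_def[symmetric] .
qed

end
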